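(* Let $\mathbf e_1,\dots,\mathbf e_n\in\mathbb R^n$ be linearly independent, let $K=\{\sum_{i=1}^n\lambda^i\mathbf e_i:\lambda^i\ge 0\}$, and for each $i$ let $\mathbf u_i\in\mathbb R^n$ satisfy $\mathbf e_j^\top\mathbf u_i=0$ for $j\neq i$ and $\mathbf e_i^\top\mathbf u_i=-1$, so that $K^\circ=\{\sum_{i=1}^n\mu^i\mathbf u_i:\mu^i\ge 0\}$. Let $N=\{1,\dots,n\}$ and let $\mathbf x\in\mathbb R^n$. For each subset $I\subset N$, with complement $I^c=N\setminus I$, $\mathbf x$ can be represented in the form $$\mathbf x=\sum_{i\in I}\alpha^i\mathbf e_i+\sum_{j\in I^c}\beta^j\mathbf u_j$$ with real numbers $\alpha^i,\beta^j$. Among the subsets $I\subset N$ (the cases $I=\emptyset$ and $I=N$ included) there exists exactly one for which the coefficients in this representation satisfy $\beta^j>0$ for all $j\in I^c$ and $\alpha^i\ge 0$ for all $i\in I$. For this representation, $$\mathbf P_K\mathbf x=\sum_{i\in I}\alpha^i\mathbf e_i\ (\alpha^i\ge 0)\quad\text{and}\quad \mathbf P_{K^\circ}\mathbf x=\sum_{j\in I^c}\beta^j\mathbf u_j\ (\beta^j>0).$$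
   Context: The polar of $K$ is $K^\circ=\{\mathbf y\in\mathbb R^n:\mathbf y^\top\mathbf z\le 0\ \forall\mathbf z\in K\}$. For a nonempty closed convex set $C\subset\mathbb R^n$, $\mathbf P_C\mathbf x$ denotes the metric (Euclidean) projection of $\mathbf x$ onto $C$, i.e. the unique point of $C$ with $\|\mathbf x-\mathbf P_C\mathbf x\|=\min\{\|\mathbf x-\mathbf y\|:\mathbf y\in C\}$, where $\|\mathbf u\|=\sqrt{\mathbf u^\top\mathbf u}$. *)

theory Defs
  imports "HOL-Analysis.Analysis"
begin

definition polar_cone :: "(real^'n) set \<Rightarrow> (real^'n) set" where
  "polar_cone K = {y. \<forall>z\<in>K. y \<bullet> z \<le> 0}"

abbreviation proj :: "(real^'n) set \<Rightarrow> real^'n \<Rightarrow> real^'n" where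
  "proj C x \<equiv> closest_point C x"

end

theory Submission
  imports Defs
begin

lemma proj_char:
  fixes C :: "(real^'n) set"
  assumes "closed C" "convex C" "a \<in> C" "\<forall>y\<in>C. b \<bullet> y \<le> 0" "b \<bullet> a = 0"
  shows "closest_point C (a + b) = a"
proof -
  have "\<forall>z\<in>C. dist (a + b) a \<le> dist (a + b) z"
  proof
    fix z assume z: "z \<in> C"
    have bz: "b \<bullet> z \<le> 0" using assms(4) z by blast
    have e1: "a + b - z = b + (a - z)" by (simp add: algebra_simps)
    have "(b + (a - z)) \<bullet> (b + (a - z)) = b \<bullet> b + 2 * (b \<bullet> (a - z)) + (a - z) \<bullet> (a - z)"
      by (simp add: inner_add_left inner_add_right inner_commute[of "a - z" b])
    also have "b \<bullet> (a - z) = b \<bullet> a - b \<bullet> z" by (rule inner_diff_right)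
    finally have e2: "(b + (a - z)) \<bullet> (b + (a - z)) = b \<bullet> b + 2 * (b \<bullet> a - b \<bullet> z) + (a - z) \<bullet> (a - z)" .
    have "(dist (a + b) z)^2 = (b + (a - z)) \<bullet> (b + (a - z))"
      unfolding dist_norm e1 by (rule power2_norm_eq_inner)
    moreover have "(dist (a + b) a)^2 = b \<bullet> b"
      unfolding dist_norm by (simp add: power2_norm_eq_inner)
    moreover have "b \<bullet> b \<le> b \<bullet> b + 2 * (b \<bullet> a - b \<bullet> z) + (a - z) \<bullet> (a - z)"
    proof -
      have t: "0 \<le> (a - z) \<bullet> (a - z)" by (rule inner_ge_zero)
      have h2: "2 * (b \<bullet> z) \<le> 0" using bz by simp
      have gen: "\<And>p q r s::real. 2*q \<le> 0 \<Longrightarrow> 0 \<le> s \<Longrightarrow> r = 0 \<Longrightarrow> p \<le> p + 2*(r - q) + s"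
        by simp
      show ?thesis by (rule gen[OF h2 t assms(5)])
    qed
    ultimately have "(dist (a + b) a)^2 \<le> (dist (a + b) z)^2"
      using e2 by simp
    then show "dist (a + b) a \<le> dist (a + b) z"
      by (rule power2_le_imp_le) simp
  qed
  from closest_point_unique[OF assms(2,1,3) this] show ?thesis by (rule sym)
qed

theorem theorem2:
  fixes e u :: "'n::finite \<Rightarrow> real^'n" and x :: "real^'n" and K :: "(real^'n) set"
  assumes e_indep: "inj e" "independent (range e)"
    and K_def: "K = {(\<Sum>i\<in>UNIV. l i *\<^sub>R e i) | l. \<forall>i. l i \<ge> 0}"
    and u_dual: "\<And>i j. e j \<bullet> u i = (if j = i then -1 else 0)"
  shows "polar_cone K = {(\<Sum>i\<in>UNIV. m i *\<^sub>R u i) | m. \<forall>i. m i \<ge> 0}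
    \<and> (\<forall>I. \<exists>\<alpha> \<beta>. x = (\<Sum>i\<in>I. \<alpha> i *\<^sub>R e i) + (\<Sum>j\<in>UNIV - I. \<beta> j *\<^sub>R u j))
    \<and> (\<exists>!I. \<exists>\<alpha> \<beta>. x = (\<Sum>i\<in>I. \<alpha> i *\<^sub>R e i) + (\<Sum>j\<in>UNIV - I. \<beta> j *\<^sub>R u j)
              \<and> (\<forall>j\<in>UNIV - I. \<beta> j > 0) \<and> (\<forall>i\<in>I. \<alpha> i \<ge> 0))
    \<and> (\<forall>I \<alpha> \<beta>. x = (\<Sum>i\<in>I. \<alpha> i *\<^sub>R e i) + (\<Sum>j\<in>UNIV - I. \<beta> j *\<^sub>R u j)
              \<and> (\<forall>j\<in>UNIV - I. \<beta> j > 0) \<and> (\<forall>i\<in>I. \<alpha> i \<ge> 0)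
          \<longrightarrow> proj K x = (\<Sum>i\<in>I. \<alpha> i *\<^sub>R e i)
            \<and> proj (polar_cone K) x = (\<Sum>j\<in>UNIV - I. \<beta> j *\<^sub>R u j))"
proof -
  have au: "(\<Sum>i\<in>I. \<alpha> i *\<^sub>R e i) \<bullet> u k = (if k \<in> I then - \<alpha> k else 0)" for I \<alpha> k
    by (simp add: inner_sum_left u_dual if_distrib cong: if_cong)
  have be: "(\<Sum>j\<in>J. \<beta> j *\<^sub>R u j) \<bullet> e k = (if k \<in> J then - \<beta> k else 0)" for J \<beta> k
    by (simp add: inner_sum_left inner_commute[of "u _"] u_dual if_distrib cong: if_cong)
  have ab: "(\<Sum>i\<in>I. \<alpha> i *\<^sub>R e i) \<bullet> (\<Sum>j\<in>UNIV - I. \<beta> j *\<^sub>R u j) = 0" for I \<alpha> \<beta>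
    by (simp add: inner_sum_right au)
  have rep: "\<exists>\<alpha> \<beta>. z = (\<Sum>i\<in>I. \<alpha> i *\<^sub>R e i) + (\<Sum>j\<in>UNIV - I. \<beta> j *\<^sub>R u j)" for I z
  proof -
    define f where "f c = (\<Sum>i\<in>I. (c $ i) *\<^sub>R e i) + (\<Sum>j\<in>UNIV - I. (c $ j) *\<^sub>R u j)"
      for c :: "real^'n"
    have lin: "linear f"
      by (rule linearI) (simp_all add: f_def scaleR_add_left sum.distrib scaleR_sum_right algebra_simps)
    have "inj f"
      unfolding linear_injective_0[OF lin]
    proof (intro allI impI)
      fix c assume c0: "f c = 0"
      let ?a = "\<Sum>i\<in>I. (c $ i) *\<^sub>R e i" and ?b = "\<Sum>j\<in>UNIV - I. (c $ j) *\<^sub>R u j"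
      have "?a = - ?b" using c0 by (simp add: f_def eq_neg_iff_add_eq_0)
      then have "?a \<bullet> ?a = ?a \<bullet> (- ?b)" by (rule arg_cong)
      also have "\<dots> = - (?a \<bullet> ?b)" by (rule inner_minus_right)
      also have "\<dots> = 0" using ab[where I=I and \<alpha>="\<lambda>i. c $ i" and \<beta>="\<lambda>j. c $ j"] by (simp only: neg_equal_0_iff_equal)
      finally have "?a = 0" by (simp only: inner_eq_zero_iff)
      moreover then have "?b = 0" using \<open>?a = - ?b\<close> by simp
      ultimately show "c = 0"
      proof -
        assume a0: "?a = 0" and b0: "?b = 0"
        show "c = 0"
        proof (rule vec_eq_iff[THEN iffD2], rule allI)
          fix k
          show "c $ k = 0 $ k"
          proof (cases "k \<in> I")
            case True
            then show ?thesis using au[where I=I and \<alpha>="\<lambda>i. c $ i" and k=k] a0 by simp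
          next
            case False
            then show ?thesis using be[where J="UNIV - I" and \<beta>="\<lambda>i. c $ i" and k=k] b0 by simp
          qed
        qed
      qed
    qed
    then have "surj f" using lin linear_injective_imp_surjective by blast
    then obtain c where "z = f c" by (metis surjD)
    then show ?thesis unfolding f_def by blast
  qed
  have Kc: "K = {z. \<forall>i. z \<bullet> u i \<le> 0}"
  proof (intro set_eqI iffI)
    fix z assume "z \<in> K"
    then obtain l where z: "z = (\<Sum>i\<in>UNIV. l i *\<^sub>R e i)" "\<forall>i. l i \<ge> 0"
      using K_def by blast
    show "z \<in> {z. \<forall>i. z \<bullet> u i \<le> 0}" using z au[where I=UNIV and \<alpha>=l] by simp
  next
    fix z assume z: "z \<in> {z. \<forall>i. z \<bullet> u i \<le> 0}"
    obtain \<alpha> \<beta> where "z = (\<Sum>i\<in>UNIV. \<alpha> i *\<^sub>R e i) + (\<Sum>j\<in>UNIV - UNIV. \<beta> j *\<^sub>R u j)"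
      using rep by blast
    then have zz: "z = (\<Sum>i\<in>UNIV. \<alpha> i *\<^sub>R e i)" by simp
    have "\<forall>i. \<alpha> i \<ge> 0"
    proof
      fix i
      have "z \<bullet> u i \<le> 0" using z by simp
      moreover have "z \<bullet> u i = - \<alpha> i" using zz au[where I=UNIV and \<alpha>=\<alpha> and k=i] by simp
      ultimately show "\<alpha> i \<ge> 0" by simp
    qed
    then show "z \<in> K" using K_def zz by blast
  qed
  have Pc: "polar_cone K = {y. \<forall>j. y \<bullet> e j \<le> 0}"
  proof (intro set_eqI iffI)
    fix y assume y: "y \<in> polar_cone K"
    have "e j \<in> K" for j
    proof -
      have "(\<Sum>i\<in>UNIV. (if i = j then 1 else 0) *\<^sub>R e i) = (\<Sum>i\<in>UNIV. if i = j then e i else 0)"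
        by (rule sum.cong) auto
      then have h1: "e j = (\<Sum>i\<in>UNIV. (if i = j then 1 else 0) *\<^sub>R e i)" by simp
      show ?thesis unfolding K_def
      proof (intro CollectI exI[where x="\<lambda>i. if i = j then 1 else (0::real)"] conjI)
        show "e j = (\<Sum>i\<in>UNIV. (if i = j then 1 else 0) *\<^sub>R e i)" by (rule h1)
        show "\<forall>i. (if i = j then 1 else 0::real) \<ge> 0" by simp
      qed
    qed
    then show "y \<in> {y. \<forall>j. y \<bullet> e j \<le> 0}" using y unfolding polar_cone_def by blast
  next
    fix y assume y: "y \<in> {y. \<forall>j. y \<bullet> e j \<le> 0}"
    show "y \<in> polar_cone K" unfolding polar_cone_def
    proof (rule CollectI, rule ballI)
      fix z assume "z \<in> K"
      then obtain l where z: "z = (\<Sum>i\<in>UNIV. l i *\<^sub>R e i)" "\<forall>i. l i \<ge> 0"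
        using K_def by blast
      have "y \<bullet> z = (\<Sum>i\<in>UNIV. l i * (y \<bullet> e i))" by (simp add: z inner_sum_right)
      also have "\<dots> \<le> 0" using y z(2) by (intro sum_nonpos) (simp add: mult_nonneg_nonpos)
      finally show "y \<bullet> z \<le> 0" .
    qed
  qed
  have part1: "polar_cone K = {(\<Sum>i\<in>UNIV. m i *\<^sub>R u i) | m. \<forall>i. m i \<ge> 0}"
  proof (intro set_eqI iffI)
    fix y assume y: "y \<in> polar_cone K"
    obtain \<alpha> \<beta> where "y = (\<Sum>i\<in>{}. \<alpha> i *\<^sub>R e i) + (\<Sum>j\<in>UNIV - {}. \<beta> j *\<^sub>R u j)"
      using rep by blast
    then have yy: "y = (\<Sum>j\<in>UNIV. \<beta> j *\<^sub>R u j)" by simp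
    have "\<forall>i. \<beta> i \<ge> 0"
    proof
      fix i
      have "y \<bullet> e i \<le> 0" using y Pc by simp
      moreover have "y \<bullet> e i = - \<beta> i" using yy be[where J=UNIV and \<beta>=\<beta> and k=i] by simp
      ultimately show "\<beta> i \<ge> 0" by simp
    qed
    then show "y \<in> {(\<Sum>i\<in>UNIV. m i *\<^sub>R u i) | m. \<forall>i. m i \<ge> 0}" using yy by blast
  next
    fix y assume "y \<in> {(\<Sum>i\<in>UNIV. m i *\<^sub>R u i) | m. \<forall>i. m i \<ge> 0}"
    then obtain m where "y = (\<Sum>i\<in>UNIV. m i *\<^sub>R u i)" "\<forall>i. m i \<ge> 0" by blast
    then show "y \<in> polar_cone K" unfolding Pc using be[where J=UNIV and \<beta>=m] by simp
  qed
  have Kcl: "closed K" "convex K"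
  proof -
    have "K = (\<Inter>i. {z. u i \<bullet> z \<le> 0})" unfolding Kc by (auto simp: inner_commute)
    then show "closed K" "convex K"
      by (auto intro!: closed_INT convex_INT closed_halfspace_le convex_halfspace_le)
  qed
  have Pcl: "closed (polar_cone K)" "convex (polar_cone K)"
  proof -
    have "polar_cone K = (\<Inter>i. {z. e i \<bullet> z \<le> 0})" unfolding Pc by (auto simp: inner_commute)
    then show "closed (polar_cone K)" "convex (polar_cone K)"
      by (auto intro!: closed_INT convex_INT closed_halfspace_le convex_halfspace_le)
  qed
  have part4: "proj K x = (\<Sum>i\<in>I. \<alpha> i *\<^sub>R e i) \<and> proj (polar_cone K) x = (\<Sum>j\<in>UNIV - I. \<beta> j *\<^sub>R u j)"
    if x: "x = (\<Sum>i\<in>I. \<alpha> i *\<^sub>R e i) + (\<Sum>j\<in>UNIV - I. \<beta> j *\<^sub>R u j)"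
      and bp: "\<forall>j\<in>UNIV - I. \<beta> j > 0" and ap: "\<forall>i\<in>I. \<alpha> i \<ge> 0" for I \<alpha> \<beta>
  proof -
    let ?a = "\<Sum>i\<in>I. \<alpha> i *\<^sub>R e i" and ?b = "\<Sum>j\<in>UNIV - I. \<beta> j *\<^sub>R u j"
    have aK: "?a \<in> K" unfolding Kc using au[where I=I and \<alpha>=\<alpha>] ap by simp
    have bP: "?b \<in> polar_cone K" unfolding Pc using be[where J="UNIV - I" and \<beta>=\<beta>] bp
      by (simp add: less_imp_le)
    have o: "?a \<bullet> ?b = 0" by (rule ab)
    have 1: "proj K x = ?a"
      using proj_char[OF Kcl(1,2) aK, of ?b] bP o x unfolding polar_cone_def
      by (simp add: inner_commute)
    have 2: "proj (polar_cone K) x = ?b"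
      using proj_char[OF Pcl(1,2) bP, of ?a] aK o x unfolding polar_cone_def
      by (simp add: inner_commute add.commute)
    show ?thesis using 1 2 by simp
  qed
  have exist: "\<exists>I \<alpha> \<beta>. x = (\<Sum>i\<in>I. \<alpha> i *\<^sub>R e i) + (\<Sum>j\<in>UNIV - I. \<beta> j *\<^sub>R u j)
              \<and> (\<forall>j\<in>UNIV - I. \<beta> j > 0) \<and> (\<forall>i\<in>I. \<alpha> i \<ge> 0)"
  proof -
    define p where "p = proj K x"
    define q where "q = x - p"
    have "0 \<in> K" unfolding Kc by simp
    then have Kne: "K \<noteq> {}" by blast
    have pK: "p \<in> K" unfolding p_def using closest_point_in_set[OF Kcl(1) Kne] .
    have dot: "q \<bullet> (z - p) \<le> 0" if "z \<in> K" for z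
      using closest_point_dot[OF Kcl(2,1) that, of x] unfolding q_def p_def .
    have "0 \<in> K" "2 *\<^sub>R p \<in> K" using pK unfolding Kc by auto
    from dot[OF this(1)] dot[OF this(2)] have qp: "q \<bullet> p = 0"
      by (simp add: inner_diff_right algebra_simps)
    have qP: "q \<in> polar_cone K" unfolding polar_cone_def
    proof (rule CollectI, rule ballI)
      fix z assume "z \<in> K"
      then have "z + p \<in> K" using pK unfolding Kc by (auto simp: inner_add_left intro: add_nonpos_nonpos)
      then show "q \<bullet> z \<le> 0" using dot[of "z + p"] by simp
    qed
    obtain lam \<beta>0 where "p = (\<Sum>i\<in>UNIV. lam i *\<^sub>R e i) + (\<Sum>j\<in>UNIV - UNIV. \<beta>0 j *\<^sub>R u j)"
      using rep by blast
    then have pr: "p = (\<Sum>i\<in>UNIV. lam i *\<^sub>R e i)" by simp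
    have lpos: "lam i \<ge> 0" for i
    proof -
      have "p \<bullet> u i \<le> 0" using pK unfolding Kc by simp
      moreover have "p \<bullet> u i = - lam i" using pr au[where I=UNIV and \<alpha>=lam and k=i] by simp
      ultimately show ?thesis by simp
    qed
    obtain \<alpha>0 \<mu> where "q = (\<Sum>i\<in>{}. \<alpha>0 i *\<^sub>R e i) + (\<Sum>j\<in>UNIV - {}. \<mu> j *\<^sub>R u j)"
      using rep by blast
    then have qr: "q = (\<Sum>j\<in>UNIV. \<mu> j *\<^sub>R u j)" by simp
    have mpos: "\<mu> i \<ge> 0" for i
    proof -
      have "q \<bullet> e i \<le> 0" using qP unfolding Pc by simp
      moreover have "q \<bullet> e i = - \<mu> i" using qr be[where J=UNIV and \<beta>=\<mu> and k=i] by simp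
      ultimately show ?thesis by simp
    qed
    have "p \<bullet> q = (\<Sum>i\<in>UNIV. lam i * (e i \<bullet> q))" by (simp add: pr inner_sum_left)
    also have "\<dots> = (\<Sum>i\<in>UNIV. - (lam i * \<mu> i))"
      using be[where J=UNIV and \<beta>=\<mu>] qr by (simp add: inner_commute)
    finally have "(\<Sum>i\<in>UNIV. lam i * \<mu> i) = 0" using qp by (simp add: inner_commute sum_negf)
    then have lm: "lam i * \<mu> i = 0" for i
      using sum_nonneg_eq_0_iff[of UNIV "\<lambda>i. lam i * \<mu> i"] lpos mpos by simp
    define I where "I = {i. \<mu> i = 0}"
    have p2: "p = (\<Sum>i\<in>I. lam i *\<^sub>R e i)"
      unfolding pr I_def using lm by (intro sum.mono_neutral_right) auto
    have q2: "q = (\<Sum>j\<in>UNIV - I. \<mu> j *\<^sub>R u j)"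
      unfolding qr I_def by (intro sum.mono_neutral_right) auto
    have "x = p + q" unfolding q_def by simp
    moreover have "\<forall>j\<in>UNIV - I. \<mu> j > 0" using mpos unfolding I_def by (simp add: less_le)
    moreover have "\<forall>i\<in>I. lam i \<ge> 0" using lpos by simp
    ultimately show ?thesis using p2 q2 by blast
  qed
  have uniq: "I = I'"
    if "x = (\<Sum>i\<in>I. \<alpha> i *\<^sub>R e i) + (\<Sum>j\<in>UNIV - I. \<beta> j *\<^sub>R u j)"
      "\<forall>j\<in>UNIV - I. \<beta> j > 0" "\<forall>i\<in>I. \<alpha> i \<ge> 0"
      "x = (\<Sum>i\<in>I'. \<alpha>' i *\<^sub>R e i) + (\<Sum>j\<in>UNIV - I'. \<beta>' j *\<^sub>R u j)"
      "\<forall>j\<in>UNIV - I'. \<beta>' j > 0" "\<forall>i\<in>I'. \<alpha>' i \<ge> 0" for I I' \<alpha> \<alpha>' \<beta> \<beta>'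
  proof -
    have eq: "(\<Sum>j\<in>UNIV - I. \<beta> j *\<^sub>R u j) = (\<Sum>j\<in>UNIV - I'. \<beta>' j *\<^sub>R u j)"
      using part4[OF that(1-3)] part4[OF that(4-6)] by simp
    show ?thesis
    proof (rule set_eqI)
      fix k
      have "(\<Sum>j\<in>UNIV - I. \<beta> j *\<^sub>R u j) \<bullet> e k = (\<Sum>j\<in>UNIV - I'. \<beta>' j *\<^sub>R u j) \<bullet> e k"
        using eq by simp
      moreover have "(\<Sum>j\<in>UNIV - I. \<beta> j *\<^sub>R u j) \<bullet> e k = (if k \<in> I then 0 else - \<beta> k)"
        using be[where J="UNIV - I" and \<beta>=\<beta> and k=k] by simp
      moreover have "(\<Sum>j\<in>UNIV - I'. \<beta>' j *\<^sub>R u j) \<bullet> e k = (if k \<in> I' then 0 else - \<beta>' k)"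
        using be[where J="UNIV - I'" and \<beta>=\<beta>' and k=k] by simp
      moreover have "k \<notin> I \<Longrightarrow> \<beta> k > 0" "k \<notin> I' \<Longrightarrow> \<beta>' k > 0" using that(2,5) by auto
      ultimately show "k \<in> I \<longleftrightarrow> k \<in> I'" by (cases "k \<in> I"; cases "k \<in> I'") auto
    qed
  qed
  show ?thesis
  proof (intro conjI allI impI)
    show "polar_cone K = {(\<Sum>i\<in>UNIV. m i *\<^sub>R u i) | m. \<forall>i. m i \<ge> 0}" by (rule part1)
  next
    fix I show "\<exists>\<alpha> \<beta>. x = (\<Sum>i\<in>I. \<alpha> i *\<^sub>R e i) + (\<Sum>j\<in>UNIV - I. \<beta> j *\<^sub>R u j)" by (rule rep)
  next
    show "\<exists>!I. \<exists>\<alpha> \<beta>. x = (\<Sum>i\<in>I. \<alpha> i *\<^sub>R e i) + (\<Sum>j\<in>UNIV - I. \<beta> j *\<^sub>R u j)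
              \<and> (\<forall>j\<in>UNIV - I. \<beta> j > 0) \<and> (\<forall>i\<in>I. \<alpha> i \<ge> 0)"
    proof -
      obtain I \<alpha> \<beta> where h: "x = (\<Sum>i\<in>I. \<alpha> i *\<^sub>R e i) + (\<Sum>j\<in>UNIV - I. \<beta> j *\<^sub>R u j)
              \<and> (\<forall>j\<in>UNIV - I. \<beta> j > 0) \<and> (\<forall>i\<in>I. \<alpha> i \<ge> 0)" using exist by blast
      show ?thesis
      proof (rule ex1I[where a=I])
        show "\<exists>\<alpha> \<beta>. x = (\<Sum>i\<in>I. \<alpha> i *\<^sub>R e i) + (\<Sum>j\<in>UNIV - I. \<beta> j *\<^sub>R u j)
              \<and> (\<forall>j\<in>UNIV - I. \<beta> j > 0) \<and> (\<forall>i\<in>I. \<alpha> i \<ge> 0)" using h by blast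
      next
        fix I' assume "\<exists>\<alpha> \<beta>. x = (\<Sum>i\<in>I'. \<alpha> i *\<^sub>R e i) + (\<Sum>j\<in>UNIV - I'. \<beta> j *\<^sub>R u j)
              \<and> (\<forall>j\<in>UNIV - I'. \<beta> j > 0) \<and> (\<forall>i\<in>I'. \<alpha> i \<ge> 0)"
        then obtain \<alpha>' \<beta>' where h': "x = (\<Sum>i\<in>I'. \<alpha>' i *\<^sub>R e i) + (\<Sum>j\<in>UNIV - I'. \<beta>' j *\<^sub>R u j)"
          "\<forall>j\<in>UNIV - I'. \<beta>' j > 0" "\<forall>i\<in>I'. \<alpha>' i \<ge> 0" by blast
        show "I' = I" using uniq[where I=I' and I'=I and \<alpha>=\<alpha>' and \<beta>=\<beta>' and \<alpha>'=\<alpha> and \<beta>'=\<beta>] h' h by blast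
      qed
    qed
  next
    fix I \<alpha> \<beta>
    assume "x = (\<Sum>i\<in>I. \<alpha> i *\<^sub>R e i) + (\<Sum>j\<in>UNIV - I. \<beta> j *\<^sub>R u j)
              \<and> (\<forall>j\<in>UNIV - I. \<beta> j > 0) \<and> (\<forall>i\<in>I. \<alpha> i \<ge> 0)"
    then show "proj K x = (\<Sum>i\<in>I. \<alpha> i *\<^sub>R e i)" "proj (polar_cone K) x = (\<Sum>j\<in>UNIV - I. \<beta> j *\<^sub>R u j)"
      using part4 by blast+
  qed
qed

end
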